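(* Let $p>1$, $\beta=1/(p-1)$, $\gamma=\frac{p-2}{2(p-1)}$, and let $\phi$ be a solution of $$\phi''=\tfrac12 y\phi'-\gamma\phi-|\phi'|^p\ (y>0),\qquad \phi(0)=0,\quad \phi'(0)=\alpha>0,$$ which exists globally on $[0,\infty)$, satisfies $\phi>0$, $\phi'>0$ on $(0,\infty)$, and for which there is $\bar R>0$ with $\phi''<0$ on $[0,\bar R)$ and $\phi''>0$ on $(\bar R,\infty)$. Then $$\lim_{y\to\infty}\frac{\phi(y)}{y^{\beta+1}}=L:=\frac{p^{-\beta}}{\beta+1}.$$ *)

theory Defs
  imports Complex_Main
begin

end

theory Submission
  imports Defs "HOL-Analysis.Analysis"
begin


lemma powr_tangent:
  fixes p a x :: real
  assumes "p \<ge> 1" "a > 0" "x > 0"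
  shows "x powr p \<ge> a powr p + p * a powr (p - 1) * (x - a)"
proof -
  have "x powr p - a powr p \<ge> (p * a powr (p - 1)) * (x - a)"
    using assms
    by (intro convex_on_imp_above_tangent[where A="{0<..}"] powr_convex)
       (auto simp: interior_open intro!: has_field_derivative_at_within has_real_derivative_powr)
  then show ?thesis by simp
qed

lemma trap:
  fixes F F' :: "real \<Rightarrow> real"
  assumes Y: "Y > 0" and eta: "\<eta> > 0"
    and der: "\<And>y. y \<ge> Y \<Longrightarrow> (F has_real_derivative F' y) (at y)"
    and cond: "\<And>y. y \<ge> Y \<Longrightarrow> F y \<ge> c \<Longrightarrow> F' y \<le> - \<eta> / y"
    and bnd: "\<And>y. y \<ge> Y \<Longrightarrow> F y \<ge> M"
  shows "eventually (\<lambda>y. F y \<le> c) at_top"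
proof -
  have enter: "\<exists>y1\<ge>Y. F y1 \<le> c"
  proof (rule ccontr)
    assume "\<not> ?thesis"
    hence gt: "\<And>y. y \<ge> Y \<Longrightarrow> F y > c" by force
    have H: "F y + \<eta> * ln y \<le> F Y + \<eta> * ln Y" if "y \<ge> Y" for y
    proof -
      have "(\<lambda>x. F x + \<eta> * ln x) y \<le> (\<lambda>x. F x + \<eta> * ln x) Y"
      proof (rule DERIV_nonpos_imp_nonincreasing[OF that])
        fix x assume x: "Y \<le> x" "x \<le> y"
        have "((\<lambda>x. F x + \<eta> * ln x) has_real_derivative F' x + \<eta> * (1/x)) (at x)"
          using x Y by (auto intro!: derivative_eq_intros der)
        moreover have "F' x + \<eta> * (1/x) \<le> 0"
          using cond[of x] gt[of x] x Y by auto
        ultimately show "\<exists>d. ((\<lambda>x. F x + \<eta> * ln x) has_real_derivative d) (at x) \<and> d \<le> 0"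
          by blast
      qed
      then show ?thesis by simp
    qed
    define T where "T = (F Y - M) / \<eta> + ln Y"
    define z where "z = max T Y + 1"
    have "exp z \<ge> z + 1" using exp_ge_add_one_self_aux[of z] Y unfolding z_def by simp
    hence ey: "exp z \<ge> Y" unfolding z_def by linarith
    have "F (exp z) + \<eta> * z \<le> F Y + \<eta> * ln Y" using H[OF ey] by simp
    moreover have "F (exp z) \<ge> M" using bnd[OF ey] .
    ultimately have "\<eta> * z \<le> F Y - M + \<eta> * ln Y" by linarith
    moreover have "\<eta> * T = F Y - M + \<eta> * ln Y" unfolding T_def using eta
      by (simp add: field_simps)
    ultimately have "\<eta> * z \<le> \<eta> * T" by linarith
    hence "z \<le> T" using eta by simp
    thus False unfolding z_def by linarith
  qed
  then obtain y1 where y1: "y1 \<ge> Y" "F y1 \<le> c" by blast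
  have "F y \<le> c" if y: "y \<ge> y1" for y
  proof (rule ccontr)
    assume "\<not> F y \<le> c"
    hence Fy: "F y > c" by simp
    have cont: "continuous_on {y1..y} F"
      using der y1 by (intro continuous_at_imp_continuous_on ballI) (meson DERIV_isCont atLeastAtMost_iff order_trans)
    obtain z where z: "z \<in> {y1..y}" "\<And>x. x \<in> {y1..y} \<Longrightarrow> F x \<le> F z"
      using continuous_attains_sup[OF compact_Icc _ cont] y by auto
    have Fz: "F z > c" using z(2)[of y] y Fy by auto
    have zy1: "z > y1" using z Fz y1 by (cases "z = y1") auto
    have "F' z \<le> - \<eta> / z" using cond[of z] z y1 Fz by auto
    also have "\<dots> < 0" using eta z y1 Y by (auto simp: field_simps)
    finally obtain d where d: "d > 0" "\<And>h. h > 0 \<Longrightarrow> h < d \<Longrightarrow> F z < F (z - h)"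
      using DERIV_neg_dec_left[OF der[of z]] z y1 by auto
    define h where "h = min (d/2) (z - y1)"
    have "h > 0" "h < d" using d zy1 by (auto simp: h_def)
    hence "F z < F (z - h)" using d by auto
    moreover have "z - h \<in> {y1..y}" using z zy1 \<open>h > 0\<close> by (auto simp: h_def)
    ultimately show False using z(2) by fastforce
  qed
  thus ?thesis unfolding eventually_at_top_linorder by blast
qed

lemma lower_alg:
  fixes g u gs m m0 \<kappa> E \<eta> ee B gp p h :: real
  assumes g: "g \<le> gs" and tang: "gs / p \<ge> gp + m * (gs - g)" and L: "gp \<ge> (1 - ee) * h"
    and h: "h = g / 2 - \<kappa> * u" and hB: "h \<le> B" and e2: "ee \<ge> 0"
    and k: "\<kappa> = 1/2 - 1/p" and E: "gs - u \<ge> E" "E > 0"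
    and m: "m \<ge> m0" "m0 > 1/2" "m0 > 1/p" "m \<le> 1" and eta: "\<eta> > 0"
    and c: "\<eta> + ee * B \<le> E * (m0 - 1/p)" and p: "p > 0"
  shows "g - u \<ge> \<eta>"
proof (rule ccontr)
  assume "\<not> ?thesis"
  hence gu: "g - u < \<eta>" by simp
  define d where "d = gs - g"
  define e where "e = gs - u"
  have de: "d > e - \<eta>" using gu by (simp add: d_def e_def)
  have s1: "(m - 1/2) * d > (m - 1/2) * (e - \<eta>)" using de m by (intro mult_strict_left_mono) auto
  have s2: "ee * h \<le> ee * B" using hB e2 by (rule mult_left_mono)
  have s3: "(1 - ee) * h = h - ee * h" by (simp add: algebra_simps)
  have s4: "h = gs / p - d / 2 + \<kappa> * e"
    unfolding h d_def e_def k using p by (simp add: field_simps)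
  have s5: "m * (gs - g) = m * d" by (simp add: d_def)
  have s6: "(m - 1/2) * d = m * d - d / 2" by (simp add: algebra_simps)
  have s7: "(m - 1/2) * d \<le> - \<kappa> * e + ee * B"
    using tang L s2 s3 s4 s5 s6 by linarith
  have s8: "(m - 1/2) * (e - \<eta>) = (m - 1/p) * e - \<kappa> * e - (m - 1/2) * \<eta>"
    unfolding k using p by (simp add: field_simps)
  have s9: "(m - 1/2) * \<eta> \<le> 1 * \<eta>" using m eta by (intro mult_right_mono) auto
  have s10: "(m - 1/p) * e \<ge> (m0 - 1/p) * E" using m E by (intro mult_mono) (auto simp: e_def)
  have "(m0 - 1/p) * E < \<eta> + ee * B" using s1 s7 s8 s9 s10 by linarith
  thus False using c by (simp add: algebra_simps)
qed



locale P72 =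
  fixes p \<alpha> Rbar :: real and \<phi> \<phi>' \<phi>'' :: "real \<Rightarrow> real"
  assumes p: "p > 1"
    and alpha: "\<alpha> > 0"
    and d1: "\<forall>y\<ge>0. (\<phi> has_real_derivative \<phi>' y) (at y within {0..})"
    and d2: "\<forall>y\<ge>0. (\<phi>' has_real_derivative \<phi>'' y) (at y within {0..})"
    and ode: "\<forall>y>0. \<phi>'' y = 1/2 * y * \<phi>' y - ((p - 2) / (2 * (p - 1))) * \<phi> y - \<bar>\<phi>' y\<bar> powr p"
    and init0: "\<phi> 0 = 0"
    and init1: "\<phi>' 0 = \<alpha>"
    and pos: "\<forall>y>0. \<phi> y > 0 \<and> \<phi>' y > 0"
    and Rpos: "Rbar > 0"
    and conc: "\<forall>y. 0 \<le> y \<and> y < Rbar \<longrightarrow> \<phi>'' y < 0"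
    and conv: "\<forall>y>Rbar. \<phi>'' y > 0"
begin

definition "\<beta> = 1 / (p - 1)"
definition "\<gamma> = (p - 2) / (2 * (p - 1))"
definition "gs = p powr (- \<beta>)"
definition "fs = gs / (\<beta> + 1)"
definition "G y = y * \<phi>' y / 2 - \<gamma> * \<phi> y"

lemma beta_pos: "\<beta> > 0" using p by (simp add: \<beta>_def)
lemma beta_p: "\<beta> * (p - 1) = 1" using p by (simp add: \<beta>_def)
lemma beta1: "\<beta> + 1 = p * \<beta>" using p by (simp add: \<beta>_def field_simps)
lemma gamma_beta: "2 * \<gamma> = 1 - \<beta>" using p by (simp add: \<beta>_def \<gamma>_def field_simps)
lemma gs_pos: "gs > 0" using p by (simp add: gs_def)
lemma fs_pos: "fs > 0" using gs_pos beta_pos by (simp add: fs_def)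
lemma gs_pm1: "gs powr (p - 1) = 1 / p"
proof -
  have "gs powr (p - 1) = p powr (- \<beta> * (p - 1))" using p by (simp add: gs_def powr_powr)
  also have "\<dots> = p powr (-1)" using beta_p by simp
  finally show ?thesis using p by (simp add: powr_minus divide_inverse)
qed
lemma gs_p: "gs powr p = gs / p"
proof -
  have "gs powr p = gs powr (1 + (p - 1))" by simp
  also have "\<dots> = gs powr 1 * gs powr (p - 1)" by (rule powr_add)
  also have "\<dots> = gs * gs powr (p - 1)" using gs_pos by simp
  finally show ?thesis using gs_pm1 by simp
qed
lemma beta1': "\<beta> + 1 = p / (p - 1)" using p by (simp add: \<beta>_def field_simps)
lemma fs_gs: "gs - gs / p = fs"
proof -
  have "fs = gs / (p / (p - 1))" by (simp add: fs_def beta1')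
  also have "\<dots> = gs * (p - 1) / p" by simp
  also have "\<dots> = gs - gs / p" using p by (simp add: field_simps)
  finally show ?thesis by simp
qed

lemma der1: "y > 0 \<Longrightarrow> (\<phi> has_real_derivative \<phi>' y) (at y)"
proof -
  assume y: "y > 0"
  have "(\<phi> has_real_derivative \<phi>' y) (at y within {0<..})"
  proof (rule DERIV_subset)
    show "(\<phi> has_real_derivative \<phi>' y) (at y within {0..})" using d1 y by simp
  qed auto
  thus ?thesis using y at_within_open[of y "{0<..}"] by simp
qed
lemma der2: "y > 0 \<Longrightarrow> (\<phi>' has_real_derivative \<phi>'' y) (at y)"
proof -
  assume y: "y > 0"
  have "(\<phi>' has_real_derivative \<phi>'' y) (at y within {0<..})"
  proof (rule DERIV_subset)
    show "(\<phi>' has_real_derivative \<phi>'' y) (at y within {0..})" using d2 y by simp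
  qed auto
  thus ?thesis using y at_within_open[of y "{0<..}"] by simp
qed

lemma ode': "y > 0 \<Longrightarrow> \<phi>'' y = G y - \<phi>' y powr p"
proof -
  assume y: "y > 0"
  have "\<phi>' y > 0" using pos y by simp
  hence "\<bar>\<phi>' y\<bar> = \<phi>' y" by simp
  thus ?thesis using ode y by (simp add: G_def \<gamma>_def)
qed

lemma U: "y > Rbar \<Longrightarrow> \<phi>' y powr p < G y"
  using ode'[of y] conv Rpos by auto

lemma vmono: "Rbar \<le> a \<Longrightarrow> a \<le> b \<Longrightarrow> \<phi>' a \<le> \<phi>' b"
proof -
  assume ab: "Rbar \<le> a" "a \<le> b"
  show ?thesis
  proof (cases "a = b")
    case False
    hence "a < b" using ab by simp
    from MVT2[OF this, of \<phi>' \<phi>''] der2 ab Rpos obtain z where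
      z: "a < z" "z < b" "\<phi>' b - \<phi>' a = (b - a) * \<phi>'' z" by force
    have "\<phi>'' z > 0" using conv z ab by auto
    hence "(b - a) * \<phi>'' z > 0" using \<open>a < b\<close> by simp
    thus ?thesis using z by linarith
  qed simp
qed

definition "v0 = \<phi>' Rbar"
lemma v0_pos: "v0 > 0" using pos Rpos by (simp add: v0_def)
lemma v_ge: "y \<ge> Rbar \<Longrightarrow> \<phi>' y \<ge> v0" using vmono by (simp add: v0_def)
lemma v_pos: "y > 0 \<Longrightarrow> \<phi>' y > 0" using pos by simp

lemma phi_le: "y \<ge> Rbar \<Longrightarrow> \<phi> y \<le> \<phi> Rbar + y * \<phi>' y"
proof -
  assume y: "y \<ge> Rbar"
  show ?thesis
  proof (cases "y = Rbar")
    case True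
    have "Rbar * \<phi>' Rbar > 0" using pos Rpos by simp
    thus ?thesis using True by simp
  next
    case False
    hence "Rbar < y" using y by simp
    from MVT2[OF this, of \<phi> \<phi>'] der1 Rpos obtain z where
      z: "Rbar < z" "z < y" "\<phi> y - \<phi> Rbar = (y - Rbar) * \<phi>' z" by force
    have "\<phi>' z \<le> \<phi>' y" using vmono z by auto
    hence "(y - Rbar) * \<phi>' z \<le> y * \<phi>' y"
      using z Rpos v_pos[of z] by (intro mult_mono) auto
    thus ?thesis using z by simp
  qed
qed

definition "C1 = max \<gamma> 0 * \<phi> Rbar"
definition "\<delta> = min (1/2) (\<beta>/2)"

lemma G_lower: "y \<ge> Rbar \<Longrightarrow> G y \<ge> \<delta> * y * \<phi>' y - C1"
proof -
  assume y: "y \<ge> Rbar"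
  have vy: "y * \<phi>' y > 0" using y Rpos v_pos[of y] by simp
  have phR: "\<phi> Rbar > 0" using pos Rpos by simp
  show ?thesis
  proof (cases "\<gamma> \<ge> 0")
    case True
    have h1: "\<gamma> * \<phi> y \<le> \<gamma> * (\<phi> Rbar + y * \<phi>' y)" using phi_le[OF y] True by (rule mult_left_mono)
    have h3: "\<delta> * (y * \<phi>' y) \<le> (\<beta>/2) * (y * \<phi>' y)" using vy by (intro mult_right_mono) (auto simp: \<delta>_def)
    have gg: "\<gamma> = (1 - \<beta>) / 2" using gamma_beta by simp
    have h2: "(1/2 - \<gamma>) * (y * \<phi>' y) = (\<beta>/2) * (y * \<phi>' y)" by (simp add: gg field_simps)
    have h4: "\<gamma> * (\<phi> Rbar + y * \<phi>' y) = \<gamma> * \<phi> Rbar + \<gamma> * (y * \<phi>' y)" by (simp add: algebra_simps)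
    have h5: "G y = (1/2) * (y * \<phi>' y) - \<gamma> * \<phi> y" by (simp add: G_def)
    have h6: "C1 = \<gamma> * \<phi> Rbar" using True by (simp add: C1_def)
    have h7: "(1/2 - \<gamma>) * (y * \<phi>' y) = (1/2) * (y * \<phi>' y) - \<gamma> * (y * \<phi>' y)" by (simp add: algebra_simps)
    show ?thesis using h1 h2 h3 h4 h5 h6 h7 by linarith
  next
    case False
    have "\<gamma> * \<phi> y \<le> 0" using False pos y Rpos by (simp add: mult_nonpos_nonneg less_imp_le)
    moreover have "\<delta> * (y * \<phi>' y) \<le> (1/2) * (y * \<phi>' y)" using vy by (intro mult_right_mono) (auto simp: \<delta>_def)
    ultimately show ?thesis using False by (simp add: G_def C1_def algebra_simps)
  qed
qed

definition "K = 1 + \<bar>\<gamma>\<bar>"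
lemma G_upper: "y \<ge> Rbar \<Longrightarrow> G y \<le> (1/2 + \<bar>\<gamma>\<bar>) * (y * \<phi>' y) + \<bar>\<gamma>\<bar> * \<phi> Rbar"
proof -
  assume y: "y \<ge> Rbar"
  have "\<phi> y > 0" using pos y Rpos by simp
  hence "- \<gamma> * \<phi> y \<le> \<bar>\<gamma>\<bar> * \<phi> y" by (intro mult_right_mono) auto
  also have "\<dots> \<le> \<bar>\<gamma>\<bar> * (\<phi> Rbar + y * \<phi>' y)" using phi_le[OF y] by (intro mult_left_mono) auto
  finally show ?thesis by (simp add: G_def algebra_simps)
qed

definition "f y = \<phi> y / y powr (\<beta> + 1)"
definition "g y = \<phi>' y / y powr \<beta>"

lemma ypow: "y > 0 \<Longrightarrow> y powr (\<beta> + 1) = y * y powr \<beta>"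
  by (simp add: powr_add)

lemma f_der: "y > 0 \<Longrightarrow> (f has_real_derivative (g y - (\<beta> + 1) * f y) / y) (at y)"
proof -
  assume y: "y > 0"
  have "((\<lambda>y. \<phi> y / y powr (\<beta> + 1)) has_real_derivative
     (\<phi>' y * y powr (\<beta> + 1) - \<phi> y * ((\<beta> + 1) * y powr (\<beta> + 1 - 1))) / (y powr (\<beta> + 1) * y powr (\<beta> + 1))) (at y)"
    using y by (intro DERIV_divide der1 has_real_derivative_powr) auto
  moreover have "(\<phi>' y * y powr (\<beta> + 1) - \<phi> y * ((\<beta> + 1) * y powr (\<beta> + 1 - 1))) / (y powr (\<beta> + 1) * y powr (\<beta> + 1))
      = (g y - (\<beta> + 1) * f y) / y"
  proof -
    have e1: "y powr (\<beta> + 1 - 1) = y powr \<beta>" by simp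
    have yq: "y powr (\<beta> + 1) = y * y powr \<beta>" using y by (rule ypow)
    have q: "y powr \<beta> > 0" using y by simp
    show ?thesis unfolding e1 yq f_def g_def using y q by (simp add: field_simps power2_eq_square)
  qed
  ultimately show ?thesis unfolding f_def by simp
qed

lemma f_pos: "y > 0 \<Longrightarrow> f y > 0" using pos by (simp add: f_def)
lemma g_pos: "y > 0 \<Longrightarrow> g y > 0" using pos by (simp add: g_def)

lemma gp: "y > 0 \<Longrightarrow> g y powr p = \<phi>' y powr p / y powr (\<beta> + 1)"
proof -
  assume y: "y > 0"
  have "g y powr p = \<phi>' y powr p / (y powr \<beta>) powr p"
    using y v_pos[of y] by (simp add: g_def powr_divide)
  also have "(y powr \<beta>) powr p = y powr (\<beta> + 1)" using beta1 by (simp add: powr_powr mult.commute)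
  finally show ?thesis .
qed

lemma gpm1: "y > 0 \<Longrightarrow> g y powr (p - 1) = \<phi>' y powr (p - 1) / y"
proof -
  assume y: "y > 0"
  have "g y powr (p - 1) = \<phi>' y powr (p - 1) / (y powr \<beta>) powr (p - 1)"
    using y v_pos[of y] by (simp add: g_def powr_divide)
  also have "(y powr \<beta>) powr (p - 1) = y" using beta_p y by (simp add: powr_powr)
  finally show ?thesis .
qed

lemma Gs: "y > 0 \<Longrightarrow> G y / y powr (\<beta> + 1) = g y / 2 - \<gamma> * f y"
proof -
  assume y: "y > 0"
  have yq: "y powr (\<beta> + 1) = y * y powr \<beta>" using y by (rule ypow)
  have q: "y powr \<beta> > 0" using y by simp
  show ?thesis unfolding yq f_def g_def G_def using y q by (simp add: field_simps)
qed

lemma Us: "y > Rbar \<Longrightarrow> g y powr p < g y / 2 - \<gamma> * f y"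
proof -
  assume y: "y > Rbar"
  hence y0: "y > 0" using Rpos by simp
  have "\<phi>' y powr p / y powr (\<beta> + 1) < G y / y powr (\<beta> + 1)"
    using U[OF y] y0 by (intro divide_strict_right_mono) auto
  thus ?thesis using gp[OF y0] Gs[OF y0] by simp
qed

lemma A: "y > Rbar \<Longrightarrow> g y - (\<beta> + 1) * f y < 2 * (fs - f y)"
proof -
  assume y: "y > Rbar"
  hence y0: "y > 0" using Rpos by simp
  have t: "g y powr p \<ge> gs powr p + p * gs powr (p - 1) * (g y - gs)"
    using p gs_pos g_pos[OF y0] by (intro powr_tangent) auto
  have t2: "p * gs powr (p - 1) = 1" using gs_pm1 p by simp
  have t3: "g y powr p \<ge> gs / p + (g y - gs)" using t unfolding t2 gs_p by simp
  have gg: "\<gamma> = (1 - \<beta>) / 2" using gamma_beta by simp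
  have e1: "\<gamma> * f y = f y / 2 - \<beta> * f y / 2" unfolding gg by (simp add: field_simps)
  have e2: "(\<beta> + 1) * f y = \<beta> * f y + f y" by (simp add: algebra_simps)
  have e3: "2 * (fs - f y) = 2 * fs - 2 * f y" by (simp add: algebra_simps)
  show ?thesis unfolding e3 using t3 Us[OF y] e1 e2 fs_gs by linarith
qed

lemma UB: "\<epsilon> > 0 \<Longrightarrow> eventually (\<lambda>y. f y \<le> fs + \<epsilon>) at_top"
proof -
  assume e: "\<epsilon> > 0"
  show ?thesis
  proof (rule trap[where Y="Rbar + 1" and \<eta>="2*\<epsilon>" and F'="\<lambda>y. (g y - (\<beta> + 1) * f y) / y" and M=0])
    fix y assume y: "y \<ge> Rbar + 1"
    hence y0: "y > 0" using Rpos by simp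
    show "(f has_real_derivative (g y - (\<beta> + 1) * f y) / y) (at y)" using f_der[OF y0] .
    show "f y \<ge> 0" using f_pos[OF y0] by simp
    assume fy: "f y \<ge> fs + \<epsilon>"
    have "g y - (\<beta> + 1) * f y \<le> - (2 * \<epsilon>)" using A[of y] y fy by simp
    thus "(g y - (\<beta> + 1) * f y) / y \<le> - (2 * \<epsilon>) / y" using y0 by (intro divide_right_mono) auto
  qed (use e Rpos in auto)
qed

definition "R y = \<phi>' y powr p / G y"
definition "\<rho> = p * \<delta> - 1/2"
definition "a0 = v0 powr (p - 1)"

lemma rho_pos: "\<rho> > 0"
proof -
  have "p * (1/2) > 1/2" using p by simp
  moreover have "p * (\<beta>/2) > 1/2" using beta1 beta_pos by (simp add: field_simps)
  ultimately show ?thesis by (simp add: \<rho>_def \<delta>_def min_def)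
qed
lemma delta_pos: "\<delta> > 0" using beta_pos by (simp add: \<delta>_def)
lemma a0_pos: "a0 > 0" using v0_pos by (simp add: a0_def)
lemma K_pos: "K > 0" by (simp add: K_def)
lemma C1_nn: "C1 \<ge> 0"
proof -
  have "\<phi> Rbar > 0" using pos Rpos by simp
  thus ?thesis by (simp add: C1_def)
qed

lemma G_pos: "y > Rbar \<Longrightarrow> G y > 0"
  using U[of y] v_pos[of y] Rpos by (smt (verit) powr_gt_zero)

lemma G_der: "y > 0 \<Longrightarrow> (G has_real_derivative (\<phi>' y + y * \<phi>'' y) / 2 - \<gamma> * \<phi>' y) (at y)"
proof -
  assume y: "y > 0"
  have "((\<lambda>y. y * \<phi>' y / 2 - \<gamma> * \<phi> y) has_real_derivative (1 * \<phi>' y + y * \<phi>'' y) / 2 - \<gamma> * \<phi>' y) (at y)"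
    by (auto intro!: derivative_eq_intros der1[OF y] der2[OF y] simp: field_simps)
  thus ?thesis unfolding G_def[abs_def] by simp
qed

lemma P_der: "y > 0 \<Longrightarrow> ((\<lambda>y. \<phi>' y powr p) has_real_derivative p * \<phi>' y powr (p - 1) * \<phi>'' y) (at y)"
proof -
  assume y: "y > 0"
  show ?thesis
    using DERIV_chain2[OF has_real_derivative_powr[of "\<phi>' y" p] der2[OF y]] v_pos[OF y] by simp
qed

definition "Pd y = p * \<phi>' y powr (p - 1) * \<phi>'' y"
definition "Gd y = (\<phi>' y + y * \<phi>'' y) / 2 - \<gamma> * \<phi>' y"
definition "Rd y = (Pd y * G y - \<phi>' y powr p * Gd y) / (G y * G y)"

lemma R_der: "y > Rbar \<Longrightarrow> (R has_real_derivative Rd y) (at y)"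
proof -
  assume y: "y > Rbar"
  hence y0: "y > 0" using Rpos by simp
  have "((\<lambda>y. \<phi>' y powr p / G y) has_real_derivative Rd y) (at y)"
    unfolding Rd_def Pd_def Gd_def
    using G_pos[OF y] by (intro DERIV_divide P_der[OF y0] G_der[OF y0]) auto
  thus ?thesis unfolding R_def[abs_def] .
qed

lemma pv: "v > 0 \<Longrightarrow> v powr p = v * v powr (p - 1)"
proof -
  assume v: "v > (0::real)"
  have "v powr p = v powr (1 + (p - 1))" by simp
  also have "\<dots> = v powr 1 * v powr (p - 1)" by (rule powr_add)
  finally show ?thesis using v by simp
qed

lemma Rd_bound:
  assumes c1: "y \<ge> Rbar + 1" and c2: "y \<ge> 1"
    and c3: "y * v0 \<ge> 2 * \<bar>\<gamma>\<bar> * \<phi> Rbar"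
    and c4: "\<rho> * (y * v0) / 2 \<ge> p * C1"
    and c5: "\<delta> * (y * v0) / 2 \<ge> C1"
    and c6: "y \<ge> 4 * (\<beta> / 2 + K / a0) / (ee * \<delta> * \<rho>)"
    and e2: "ee > 0" and Ry: "R y \<le> 1 - ee"
  shows "Rd y \<ge> (1 / K) / y"
proof -
  have y: "y > Rbar" using c1 by simp
  have y0: "y > 0" using c2 by simp
  define v where "v = \<phi>' y"
  define a where "a = v powr (p - 1)"
  define P where "P = v powr p"
  define Gy where "Gy = G y"
  define dd where "dd = \<phi>'' y"
  define W where "W = y * v"
  have vpos: "v > 0" using v_pos[OF y0] by (simp add: v_def)
  have vge: "v \<ge> v0" using v_ge[of y] y by (simp add: v_def)
  have aa: "a \<ge> a0" unfolding a_def a0_def using p v0_pos vge by (intro powr_mono2) auto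
  have apos: "a > 0" using vpos by (simp add: a_def)
  have Pva: "P = v * a" using pv[OF vpos] by (simp add: P_def a_def)
  have Gpos: "Gy > 0" using G_pos[OF y] by (simp add: Gy_def)
  have "P / Gy \<le> 1 - ee" using Ry by (simp add: R_def P_def Gy_def v_def)
  hence PG: "P \<le> (1 - ee) * Gy" using Gpos by (simp add: pos_divide_le_eq)
  have dd_eq: "dd = Gy - P" using ode'[OF y0] by (simp add: dd_def Gy_def P_def v_def)
  have dd_ge: "dd \<ge> ee * Gy" using dd_eq PG by (simp add: algebra_simps)
  have Wpos: "W > 0" using y0 vpos by (simp add: W_def)
  have Wge: "W \<ge> y * v0" unfolding W_def using vge y0 by (intro mult_left_mono) auto
  have Gup: "Gy \<le> K * W"
  proof -
    have g1: "Gy \<le> (1/2 + \<bar>\<gamma>\<bar>) * W + \<bar>\<gamma>\<bar> * \<phi> Rbar"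
      using G_upper[of y] y by (simp add: Gy_def W_def v_def)
    have g2: "K * W = (1/2 + \<bar>\<gamma>\<bar>) * W + W / 2" by (simp add: K_def algebra_simps)
    show ?thesis using g1 g2 c3 Wge by linarith
  qed
  have Glow: "Gy \<ge> \<delta> * W / 2"
  proof -
    have g1: "Gy \<ge> \<delta> * W - C1" using G_lower[of y] y by (simp add: Gy_def W_def v_def mult.assoc)
    have g2: "\<delta> * (y * v0) \<le> \<delta> * W" using Wge delta_pos by (intro mult_left_mono) auto
    show ?thesis using g1 g2 c5 by linarith
  qed
  have X: "p * Gy - W / 2 \<ge> \<rho> * W / 2"
  proof -
    have g1: "Gy \<ge> \<delta> * W - C1" using G_lower[of y] y by (simp add: Gy_def W_def v_def mult.assoc)
    have x1: "p * Gy \<ge> p * (\<delta> * W - C1)"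
      using g1 p by (intro mult_left_mono) auto
    have x2: "p * (\<delta> * W - C1) = (p * \<delta>) * W - p * C1" by (simp add: algebra_simps)
    have x3: "\<rho> * W = (p * \<delta>) * W - W / 2" by (simp add: \<rho>_def algebra_simps)
    have x4: "\<rho> * (y * v0) \<le> \<rho> * W" using Wge rho_pos by (intro mult_left_mono) auto
    show ?thesis using x1 x2 x3 x4 c4 by linarith
  qed
  have Xnn: "\<rho> * W / 2 \<ge> 0" using rho_pos Wpos by simp
  have T1: "dd * (p * Gy - W / 2) \<ge> (ee * (\<delta> * W / 2)) * (\<rho> * W / 2)"
  proof -
    have "(ee * (\<delta> * W / 2)) \<le> ee * Gy" using Glow e2 by (intro mult_left_mono) auto
    also have "\<dots> \<le> dd" by (rule dd_ge)
    finally have dl: "(ee * (\<delta> * W / 2)) \<le> dd" .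
    have "ee * (\<delta> * W / 2) > 0" using e2 delta_pos Wpos by simp
    hence "dd \<ge> 0" using dl by linarith
    thus ?thesis using dl X Xnn e2 delta_pos Wpos by (intro mult_mono) auto
  qed
  have Neq: "Pd y * G y - \<phi>' y powr p * Gd y = a * (dd * (p * Gy - W / 2) - v * v * (\<beta> / 2))"
  proof -
    have gg: "\<gamma> = (1 - \<beta>) / 2" using gamma_beta by simp
    show ?thesis unfolding Pd_def Gd_def
      using Pva by (simp add: a_def[symmetric] v_def[symmetric] P_def[symmetric] Gy_def[symmetric]
          dd_def[symmetric] W_def gg field_simps)
  qed
  have c6': "ee * \<delta> * \<rho> * y / 4 \<ge> \<beta> / 2 + K / a0"
  proof -
    have pp: "ee * \<delta> * \<rho> > 0" using e2 delta_pos rho_pos by simp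
    have "4 * (\<beta> / 2 + K / a0) \<le> y * (ee * \<delta> * \<rho>)" using c6 pp by (simp add: pos_divide_le_eq)
    thus ?thesis by (simp add: algebra_simps)
  qed
  have c7: "ee * \<delta> * \<rho> * y * y / 4 - \<beta> / 2 \<ge> K * y / a0"
  proof -
    have "(\<beta> / 2 + K / a0) * y \<le> (ee * \<delta> * \<rho> * y / 4) * y" using c6' y0 by (intro mult_right_mono) auto
    moreover have "\<beta> / 2 \<le> \<beta> / 2 * y" using c2 beta_pos by simp
    ultimately show ?thesis by (simp add: algebra_simps)
  qed
  have B1: "dd * (p * Gy - W / 2) - v * v * (\<beta> / 2) \<ge> v * v * (K * y / a0)"
  proof -
    have "(ee * (\<delta> * W / 2)) * (\<rho> * W / 2) - v * v * (\<beta> / 2) = v * v * (ee * \<delta> * \<rho> * y * y / 4 - \<beta> / 2)"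
      by (simp add: W_def algebra_simps)
    moreover have "v * v * (ee * \<delta> * \<rho> * y * y / 4 - \<beta> / 2) \<ge> v * v * (K * y / a0)"
      using c7 vpos by (intro mult_left_mono) auto
    ultimately show ?thesis using T1 by linarith
  qed
  have N: "Pd y * G y - \<phi>' y powr p * Gd y \<ge> K * v * v * y"
  proof -
    have "a * (v * v * (K * y / a0)) \<le> a * (dd * (p * Gy - W / 2) - v * v * (\<beta> / 2))"
      using B1 apos by (intro mult_left_mono) auto
    moreover have "a * (v * v * (K * y / a0)) = (a / a0) * (K * v * v * y)" by (simp add: algebra_simps)
    moreover have "(a / a0) * (K * v * v * y) \<ge> 1 * (K * v * v * y)"
      using aa a0_pos K_pos vpos y0 by (intro mult_right_mono) auto
    ultimately show ?thesis unfolding Neq by linarith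
  qed
  have "K * v * v * y > 0" using K_pos vpos y0 by simp
  hence Nn: "Pd y * G y - \<phi>' y powr p * Gd y \<ge> 0" using N by linarith
  have "(1 / K) / y = (K * v * v * y) / ((K * W) * (K * W))"
    using K_pos vpos y0 by (simp add: W_def field_simps)
  also have "\<dots> \<le> (Pd y * G y - \<phi>' y powr p * Gd y) / (Gy * Gy)"
    using Nn N Gpos Gup K_pos vpos y0 by (intro frac_le mult_mono) auto
  also have "\<dots> = Rd y" by (simp add: Rd_def Gy_def)
  finally show ?thesis .
qed

lemma LB_R:
  assumes e2: "0 < ee" "ee < 1"
  shows "eventually (\<lambda>y. \<phi>' y powr p \<ge> (1 - ee) * G y) at_top"
proof -
  define Y2 where "Y2 = max (Rbar + 1) (max 1 (max (2 * \<bar>\<gamma>\<bar> * \<phi> Rbar / v0)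
     (max (2 * p * C1 / (\<rho> * v0)) (max (2 * C1 / (\<delta> * v0)) (4 * (\<beta> / 2 + K / a0) / (ee * \<delta> * \<rho>))))))"
  have Y2pos: "Y2 > 0" using Rpos by (simp add: Y2_def)
  have ev: "eventually (\<lambda>y. - R y \<le> - (1 - ee)) at_top"
  proof (rule trap[where Y=Y2 and \<eta>="1/K" and F'="\<lambda>y. - Rd y" and M="-1"])
    fix y assume y: "y \<ge> Y2"
    have c1: "y \<ge> Rbar + 1" and c2: "y \<ge> 1" using y by (auto simp: Y2_def)
    have yR: "y > Rbar" using c1 by simp
    show "((\<lambda>y. - R y) has_real_derivative - Rd y) (at y)" using R_der[OF yR] by (rule DERIV_minus)
    have "\<phi>' y powr p < G y" using U[OF yR] .
    hence "R y < 1" using G_pos[OF yR] by (simp add: R_def)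
    thus "- R y \<ge> -1" by simp
    assume Ry: "- R y \<ge> - (1 - ee)"
    have c3: "y * v0 \<ge> 2 * \<bar>\<gamma>\<bar> * \<phi> Rbar"
    proof -
      have "2 * \<bar>\<gamma>\<bar> * \<phi> Rbar / v0 \<le> y" using y by (simp add: Y2_def)
      thus ?thesis using v0_pos by (simp add: pos_divide_le_eq)
    qed
    have c4: "\<rho> * (y * v0) / 2 \<ge> p * C1"
    proof -
      have "2 * p * C1 / (\<rho> * v0) \<le> y" using y by (simp add: Y2_def)
      hence "2 * p * C1 \<le> y * (\<rho> * v0)" using v0_pos rho_pos by (simp add: pos_divide_le_eq)
      thus ?thesis by (simp add: algebra_simps)
    qed
    have c5: "\<delta> * (y * v0) / 2 \<ge> C1"
    proof -
      have "2 * C1 / (\<delta> * v0) \<le> y" using y by (simp add: Y2_def)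
      hence "2 * C1 \<le> y * (\<delta> * v0)" using v0_pos delta_pos by (simp add: pos_divide_le_eq)
      thus ?thesis by (simp add: algebra_simps)
    qed
    have c6: "y \<ge> 4 * (\<beta> / 2 + K / a0) / (ee * \<delta> * \<rho>)" using y by (simp add: Y2_def)
    have "Rd y \<ge> (1 / K) / y" using Rd_bound[OF c1 c2 c3 c4 c5 c6 e2(1)] Ry by simp
    thus "- Rd y \<le> - (1 / K) / y" by simp
  qed (use Y2pos K_pos in auto)
  moreover have "eventually (\<lambda>y. y > Rbar) at_top" by (rule eventually_gt_at_top)
  ultimately show ?thesis
  proof eventually_elim
    case (elim y)
    hence "\<phi>' y powr p / G y \<ge> 1 - ee" by (simp add: R_def)
    thus ?case using G_pos[OF elim(2)] by (simp add: pos_le_divide_eq)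
  qed
qed

definition "B = fs + 2 * \<bar>\<gamma>\<bar> * (fs + 1)"

lemma kappa_gamma: "(1/2 - 1/p) * (\<beta> + 1) = \<gamma>"
  using p unfolding beta1' \<gamma>_def by (simp add: field_simps)

lemma lower_pt:
  assumes y: "y > Rbar" and Ly: "\<phi>' y powr p \<ge> (1 - ee) * G y"
    and fU: "f y \<le> fs + 1" and fL: "f y \<le> fs - \<epsilon>" and e: "\<epsilon> > 0"
    and e2: "0 \<le> ee"
    and hmz: "mz > 1/2" "mz > 1/p"
    and hc: "\<eta> + ee * B \<le> ((\<beta> + 1) * \<epsilon>) * (mz - 1/p)" "\<eta> > 0" "\<eta> \<le> (\<beta> + 1) * \<epsilon>"
    and mb: "g y - (\<beta> + 1) * f y < \<eta> \<Longrightarrow> p * g y powr (p - 1) \<ge> mz"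
  shows "g y - (\<beta> + 1) * f y \<ge> \<eta>"
proof -
  have y0: "y > 0" using y Rpos by simp
  define u where "u = (\<beta> + 1) * f y"
  define gg where "gg = g y"
  define h where "h = gg / 2 - \<gamma> * f y"
  have ggpos: "gg > 0" using g_pos[OF y0] by (simp add: gg_def)
  have gs_eq: "gs = (\<beta> + 1) * fs" using beta_pos by (simp add: fs_def)
  have E: "gs - u \<ge> (\<beta> + 1) * \<epsilon>"
  proof -
    have "(\<beta> + 1) * f y \<le> (\<beta> + 1) * (fs - \<epsilon>)" using fL beta_pos by (intro mult_left_mono) auto
    thus ?thesis unfolding gs_eq u_def by (simp add: algebra_simps)
  qed
  have Epos: "(\<beta> + 1) * \<epsilon> > 0" using e beta_pos by simp
  show ?thesis
  proof (cases "gg \<le> gs")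
    case False
    thus ?thesis using E hc by (simp add: gg_def u_def)
  next
    case True
    show ?thesis
    proof (rule ccontr)
      assume nt: "\<not> ?thesis"
      hence m: "p * gg powr (p - 1) \<ge> mz" using mb by (simp add: gg_def)
      have Ls: "gg powr p \<ge> (1 - ee) * h"
      proof -
        have "(1 - ee) * G y / y powr (\<beta> + 1) \<le> \<phi>' y powr p / y powr (\<beta> + 1)"
          using Ly y0 by (intro divide_right_mono) auto
        moreover have "(1 - ee) * G y / y powr (\<beta> + 1) = (1 - ee) * (g y / 2 - \<gamma> * f y)"
          using Gs[OF y0] by (metis times_divide_eq_right)
        ultimately show ?thesis using gp[OF y0] by (simp add: gg_def h_def)
      qed
      have hB: "h \<le> B"
      proof -
        have a: "g y - (\<beta> + 1) * f y < 2 * fs - 2 * f y" using A[OF y] by (simp add: algebra_simps)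
        have gq: "\<gamma> = (1 - \<beta>) / 2" using gamma_beta by simp
        have gg2: "\<gamma> * f y = f y / 2 - \<beta> * f y / 2" unfolding gq by (simp add: field_simps)
        have e3: "(\<beta> + 1) * f y = \<beta> * f y + f y" by (simp add: algebra_simps)
        have h1: "h < fs - 2 * (\<gamma> * f y)" using a gg2 e3 unfolding h_def gg_def by linarith
        have fpos: "f y > 0" using f_pos[OF y0] .
        have "- \<gamma> * f y \<le> \<bar>\<gamma>\<bar> * f y" using fpos by (intro mult_right_mono) auto
        also have "\<dots> \<le> \<bar>\<gamma>\<bar> * (fs + 1)" using fU by (intro mult_left_mono) auto
        finally show ?thesis using h1 unfolding B_def by linarith
      qed
      have mle: "p * gg powr (p - 1) \<le> 1"
      proof -
        have "gg powr (p - 1) \<le> gs powr (p - 1)" using True ggpos p by (intro powr_mono2) auto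
        thus ?thesis using gs_pm1 p by (simp add: field_simps)
      qed
      have tang: "gs powr p \<ge> gg powr p + p * gg powr (p - 1) * (gs - gg)"
        using p ggpos gs_pos by (intro powr_tangent) auto
      have "gg - u \<ge> \<eta>"
      proof (rule lower_alg[where gs=gs and m="p * gg powr (p - 1)" and m0=mz and \<kappa>="1/2 - 1/p"
            and E="(\<beta> + 1) * \<epsilon>" and ee=ee and B=B and gp="gg powr p" and p=p and h=h])
        show "gs / p \<ge> gg powr p + p * gg powr (p - 1) * (gs - gg)" using tang gs_p by simp
        show "h = gg / 2 - (1/2 - 1/p) * u" unfolding h_def u_def using kappa_gamma
          by (metis mult.assoc)
      qed (use True Ls hB e2 E Epos m hmz mle hc p in auto)
      thus False using nt by (simp add: gg_def u_def)
    qed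
  qed
qed

lemma mb_ge2:
  assumes p2: "p \<ge> 2" and y: "y > Rbar" and Ly: "\<phi>' y powr p \<ge> (1 - ee) * G y"
    and e2: "0 \<le> ee" "ee \<le> \<beta> / 8" and c: "y * v0 \<ge> 8 * p * C1 / \<beta>"
  shows "p * g y powr (p - 1) \<ge> 1/2 + \<beta>/4"
proof -
  have y0: "y > 0" using y Rpos by simp
  define v where "v = \<phi>' y"
  define a where "a = v powr (p - 1)"
  define W where "W = y * v"
  define X where "X = 1 - ee"
  have b1: "\<beta> \<le> 1" using p2 by (simp add: \<beta>_def)
  have vpos: "v > 0" using v_pos[OF y0] by (simp add: v_def)
  have Wpos: "W > 0" using vpos y0 by (simp add: W_def)
  have Wge: "W \<ge> y * v0" unfolding W_def using v_ge[of y] y y0 by (intro mult_left_mono) (auto simp: v_def)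
  have Xnn: "X \<ge> 0" using e2 b1 by (simp add: X_def)
  have dl: "\<delta> = \<beta> / 2" using b1 by (simp add: \<delta>_def min_def)
  have s1: "v * a \<ge> X * (\<delta> * W - C1)"
  proof -
    have "G y \<ge> \<delta> * W - C1" using G_lower[of y] y by (simp add: W_def v_def mult.assoc)
    hence "X * (\<delta> * W - C1) \<le> X * G y" using Xnn by (intro mult_left_mono) auto
    moreover have "v * a = \<phi>' y powr p" using pv[OF vpos] by (simp add: a_def v_def)
    ultimately show ?thesis using Ly by (simp add: X_def)
  qed
  have s2: "p * (v * a) \<ge> X * ((p * \<delta>) * W - p * C1)"
  proof -
    have "p * (X * (\<delta> * W - C1)) \<le> p * (v * a)" using s1 p by (intro mult_left_mono) auto
    moreover have "p * (X * (\<delta> * W - C1)) = X * ((p * \<delta>) * W - p * C1)" by (simp add: algebra_simps)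
    ultimately show ?thesis by simp
  qed
  have s3: "p * \<delta> = 1/2 + \<beta>/2" using beta1 dl by (simp add: field_simps) 
  have s4: "p * C1 \<le> \<beta> / 8 * W"
  proof -
    have "8 * p * C1 \<le> y * v0 * \<beta>" using c beta_pos by (simp add: pos_divide_le_eq)
    moreover have "y * v0 * \<beta> \<le> W * \<beta>" using Wge beta_pos by (intro mult_right_mono) auto
    ultimately have "8 * p * C1 \<le> W * \<beta>" by linarith
    thus ?thesis by (simp add: field_simps mult.commute)
  qed
  have s5: "(p * \<delta>) * W - p * C1 \<ge> (1/2 + 3 * \<beta> / 8) * W"
    using s3 s4 by (simp add: algebra_simps)
  have s6: "X * ((p * \<delta>) * W - p * C1) \<ge> X * ((1/2 + 3 * \<beta> / 8) * W)"
    using s5 Xnn by (intro mult_left_mono) auto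
  have s7: "ee * ((1/2 + 3 * \<beta> / 8) * W) \<le> (\<beta> / 8) * (1 * W)"
    using e2 b1 Wpos beta_pos by (intro mult_mono) auto
  have s8: "X * ((1/2 + 3 * \<beta> / 8) * W) = (1/2 + 3 * \<beta> / 8) * W - ee * ((1/2 + 3 * \<beta> / 8) * W)"
    by (simp add: X_def field_simps)
  have s9: "p * (v * a) \<ge> (1/2 + \<beta>/4) * W" using s2 s6 s7 s8 by (simp add: algebra_simps)
  have meq: "p * g y powr (p - 1) * W = p * (v * a)"
    using gpm1[OF y0] y0 by (simp add: W_def a_def v_def)
  have "(1/2 + \<beta>/4) * W \<le> (p * g y powr (p - 1)) * W" using s9 meq by linarith
  thus ?thesis using Wpos by simp
qed

lemma mb_lt2:
  assumes p2: "p < 2" and y: "y > Rbar" and Ly: "\<phi>' y powr p \<ge> (1 - ee) * G y"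
    and e2: "0 \<le> ee" "ee \<le> (1 - 1/p) / 4"
    and eta: "\<eta> > 0" "\<eta> \<le> (1/4) powr \<beta> * ((1 - 1/p) / 2) / (2 * p * (1/p - 1/2))"
    and gu: "g y - (\<beta> + 1) * f y < \<eta>"
  shows "p * g y powr (p - 1) \<ge> (1 + 1/p) / 2"
proof -
  have y0: "y > 0" using y Rpos by simp
  define u where "u = (\<beta> + 1) * f y"
  define gg where "gg = g y"
  define q where "q = gg powr (p - 1)"
  define k' where "k' = 1/p - 1/2"
  define \<theta> where "\<theta> = (1 - 1/p) / 2"
  have kpos: "k' > 0" using p2 p by (simp add: k'_def field_simps)
  have th: "\<theta> > 0" "\<theta> < 1/2" using p by (auto simp: \<theta>_def field_simps)
  have ggpos: "gg > 0" using g_pos[OF y0] by (simp add: gg_def)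
  have upos: "u > 0" using f_pos[OF y0] beta_pos by (simp add: u_def)
  have gp_eq: "gg powr p = gg * q" using pv[OF ggpos] by (simp add: q_def)
  have gfu: "\<gamma> * f y = - k' * u" unfolding u_def k'_def using kappa_gamma
    by (metis (no_types, lifting) minus_diff_eq mult.assoc mult_minus_left)
  have Ls: "gg * q \<ge> (1 - ee) * (gg / 2 + k' * u)"
  proof -
    have "(1 - ee) * G y / y powr (\<beta> + 1) \<le> \<phi>' y powr p / y powr (\<beta> + 1)"
      using Ly y0 by (intro divide_right_mono) auto
    moreover have "(1 - ee) * G y / y powr (\<beta> + 1) = (1 - ee) * (g y / 2 - \<gamma> * f y)"
      using Gs[OF y0] by (metis times_divide_eq_right)
    ultimately show ?thesis using gp[OF y0] gp_eq gfu by (simp add: gg_def)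
  qed
  have Xnn: "1 - ee \<ge> 1/2"
  proof -
    have "1/p > 0" using p by simp
    hence "(1 - 1/p) / 4 \<le> 1/4" by simp
    thus ?thesis using e2 by linarith
  qed
  have q4: "q \<ge> 1/4"
  proof -
    have "(1 - ee) * (gg / 2) \<le> (1 - ee) * (gg / 2 + k' * u)"
      using kpos upos Xnn by (intro mult_left_mono) auto
    moreover have "(1/2) * (gg / 2) \<le> (1 - ee) * (gg / 2)" using Xnn ggpos by (intro mult_right_mono) auto
    ultimately have "gg * (1/4) \<le> gg * q" using Ls by simp
    thus ?thesis using ggpos by simp
  qed
  have gl: "gg \<ge> (1/4) powr \<beta>"
  proof -
    have "q powr \<beta> = gg" unfolding q_def using ggpos beta_p by (simp add: powr_powr mult.commute)
    moreover have "(1/4) powr \<beta> \<le> q powr \<beta>" using q4 beta_pos by (intro powr_mono2) auto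
    ultimately show ?thesis by simp
  qed
  have l1: "k' * u \<ge> k' * (gg - \<eta>)" using gu kpos by (intro mult_left_mono) (auto simp: u_def gg_def)
  have l2: "gg * q \<ge> (1 - ee) * (gg / 2 + k' * (gg - \<eta>))"
  proof -
    have "(1 - ee) * (gg / 2 + k' * (gg - \<eta>)) \<le> (1 - ee) * (gg / 2 + k' * u)"
      using l1 Xnn by (intro mult_left_mono) auto
    thus ?thesis using Ls by simp
  qed
  have l3: "gg / 2 + k' * (gg - \<eta>) = gg / p - k' * \<eta>" using p by (simp add: k'_def field_simps)
  have l4: "p * (gg * q) \<ge> (1 - ee) * (gg - p * k' * \<eta>)"
  proof -
    have "p * ((1 - ee) * (gg / p - k' * \<eta>)) \<le> p * (gg * q)" using l2 l3 p by (intro mult_left_mono) auto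
    moreover have "p * ((1 - ee) * (gg / p - k' * \<eta>)) = (1 - ee) * (gg - p * k' * \<eta>)"
      using p by (simp add: field_simps)
    ultimately show ?thesis by simp
  qed
  have l5: "p * k' * \<eta> \<le> gg * (\<theta> / 2)"
  proof -
    have pk: "2 * p * k' > 0" using kpos p by simp
    have e0: "\<eta> \<le> (1/4) powr \<beta> * \<theta> / (2 * p * k')" using eta(2) by (simp add: \<theta>_def k'_def)
    have "\<eta> * (2 * p * k') \<le> ((1/4) powr \<beta> * \<theta> / (2 * p * k')) * (2 * p * k')"
      using mult_right_mono[OF e0, of "2 * p * k'"] pk by simp
    moreover have "((1/4) powr \<beta> * \<theta> / (2 * p * k')) * (2 * p * k') = (1/4) powr \<beta> * \<theta>"
      using pk by (metis less_irrefl nonzero_eq_divide_eq)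
    ultimately have "\<eta> * (2 * p * k') \<le> (1/4) powr \<beta> * \<theta>" by linarith
    moreover have "(1/4) powr \<beta> * \<theta> \<le> gg * \<theta>" using gl th by (intro mult_right_mono) auto
    ultimately show ?thesis by (simp add: algebra_simps)
  qed
  have l6: "ee * gg \<le> (\<theta> / 2) * gg" using e2 ggpos by (intro mult_right_mono) (auto simp: \<theta>_def)
  have l7: "(1 - ee) * (gg - p * k' * \<eta>) \<ge> gg - ee * gg - p * k' * \<eta>"
  proof -
    have "ee * (p * k' * \<eta>) \<ge> 0" using e2 p kpos eta by simp
    thus ?thesis by (simp add: algebra_simps)
  qed
  have "gg * (p * q) \<ge> gg * (1 - \<theta>)" using l4 l5 l6 l7 by (simp add: algebra_simps)
  hence "p * q \<ge> 1 - \<theta>" using ggpos by simp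
  thus ?thesis by (simp add: q_def gg_def \<theta>_def field_simps)
qed

lemma B_pos: "B > 0"
proof -
  have "2 * \<bar>\<gamma>\<bar> * (fs + 1) \<ge> 0" using fs_pos by simp
  thus ?thesis using fs_pos unfolding B_def by linarith
qed

lemma LB_gen:
  assumes e: "\<epsilon> > 0" and e2: "0 < ee" "ee < 1" and eta: "\<eta> > 0" "\<eta> \<le> (\<beta> + 1) * \<epsilon>"
    and c: "\<eta> + ee * B \<le> ((\<beta> + 1) * \<epsilon>) * (mz - 1/p)" and hmz: "mz > 1/2" "mz > 1/p"
    and evmb: "eventually (\<lambda>y. \<phi>' y powr p \<ge> (1 - ee) * G y \<longrightarrow> y > Rbar \<longrightarrow>
                 g y - (\<beta> + 1) * f y < \<eta> \<longrightarrow> p * g y powr (p - 1) \<ge> mz) at_top"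
  shows "eventually (\<lambda>y. f y \<ge> fs - \<epsilon>) at_top"
proof -
  have "eventually (\<lambda>y. (\<phi>' y powr p \<ge> (1 - ee) * G y \<longrightarrow> y > Rbar \<longrightarrow>
                 g y - (\<beta> + 1) * f y < \<eta> \<longrightarrow> p * g y powr (p - 1) \<ge> mz)
       \<and> \<phi>' y powr p \<ge> (1 - ee) * G y \<and> f y \<le> fs + 1) at_top"
    using evmb LB_R[OF e2] UB[of 1] by (auto intro: eventually_conj)
  then obtain N where N: "\<And>y. y \<ge> N \<Longrightarrow> (\<phi>' y powr p \<ge> (1 - ee) * G y \<longrightarrow> y > Rbar \<longrightarrow>
                 g y - (\<beta> + 1) * f y < \<eta> \<longrightarrow> p * g y powr (p - 1) \<ge> mz)
       \<and> \<phi>' y powr p \<ge> (1 - ee) * G y \<and> f y \<le> fs + 1"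
    unfolding eventually_at_top_linorder by blast
  define Y where "Y = max N (Rbar + 1)"
  have "eventually (\<lambda>y. - f y \<le> - (fs - \<epsilon>)) at_top"
  proof (rule trap[where Y=Y and \<eta>=\<eta> and F'="\<lambda>y. - ((g y - (\<beta> + 1) * f y) / y)" and M="- (fs + 1)"])
    fix y assume y: "y \<ge> Y"
    have yN: "y \<ge> N" and yR: "y > Rbar" using y Rpos by (auto simp: Y_def)
    have y0: "y > 0" using yR Rpos by simp
    show "((\<lambda>y. - f y) has_real_derivative - ((g y - (\<beta> + 1) * f y) / y)) (at y)"
      using f_der[OF y0] by (rule DERIV_minus)
    show "- f y \<ge> - (fs + 1)" using N[OF yN] by simp
    assume fy: "- f y \<ge> - (fs - \<epsilon>)"
    have "g y - (\<beta> + 1) * f y \<ge> \<eta>"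
    proof (rule lower_pt[where ee=ee and mz=mz and \<epsilon>=\<epsilon>])
      show "g y - (\<beta> + 1) * f y < \<eta> \<Longrightarrow> p * g y powr (p - 1) \<ge> mz" using N[OF yN] yR by blast
    qed (use yR N[OF yN] fy e e2 hmz c eta in auto)
    hence "\<eta> / y \<le> (g y - (\<beta> + 1) * f y) / y" using y0 by (intro divide_right_mono) auto
    thus "- ((g y - (\<beta> + 1) * f y) / y) \<le> - \<eta> / y" by simp
  qed (use eta Rpos in \<open>auto simp: Y_def\<close>)
  thus ?thesis by (auto elim: eventually_mono)
qed

lemma LB: "\<epsilon> > 0 \<Longrightarrow> eventually (\<lambda>y. f y \<ge> fs - \<epsilon>) at_top"
proof -
  assume e: "\<epsilon> > 0"
  define E where "E = (\<beta> + 1) * \<epsilon>"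
  have Epos: "E > 0" using e beta_pos by (simp add: E_def)
  have ip: "1/p > 0" "1/p < 1" using p by auto
  show ?thesis
  proof (cases "p \<ge> 2")
    case True
    have b1: "\<beta> \<le> 1" using True by (simp add: \<beta>_def)
    have ip2: "1/p \<le> 1/2" using True by (simp add: field_simps)
    define mz where "mz = 1/2 + \<beta>/4"
    define \<theta> where "\<theta> = mz - 1/p"
    have th: "\<theta> > 0" "\<theta> \<le> 1" unfolding \<theta>_def mz_def using ip ip2 beta_pos b1 by linarith+
    define ee where "ee = min (E * \<theta> / (2 * B)) (\<beta> / 8)"
    define \<eta> where "\<eta> = E * \<theta> / 2"
    have e2: "0 < ee" "ee < 1" "ee \<le> \<beta> / 8" using Epos th B_pos beta_pos b1 by (auto simp: ee_def)
    have e2B: "ee * B \<le> E * \<theta> / 2"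
    proof -
      have "ee * B \<le> (E * \<theta> / (2 * B)) * B" using B_pos by (intro mult_right_mono) (auto simp: ee_def)
      thus ?thesis using B_pos by simp
    qed
    have eta: "\<eta> > 0" "\<eta> \<le> E" using Epos th by (auto simp: \<eta>_def)
    show ?thesis
    proof (rule LB_gen[where ee=ee and \<eta>=\<eta> and mz=mz])
      show "eventually (\<lambda>y. \<phi>' y powr p \<ge> (1 - ee) * G y \<longrightarrow> y > Rbar \<longrightarrow>
                 g y - (\<beta> + 1) * f y < \<eta> \<longrightarrow> p * g y powr (p - 1) \<ge> mz) at_top"
        using eventually_ge_at_top[of "8 * p * C1 / \<beta> / v0"]
      proof eventually_elim
        case (elim y)
        define X where "X = 8 * p * C1 / \<beta>"
        have "X / v0 \<le> y" using elim by (simp add: X_def)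
        hence "X / v0 * v0 \<le> y * v0" using v0_pos by (intro mult_right_mono) auto
        hence "y * v0 \<ge> X" using v0_pos by simp
        hence "y * v0 \<ge> 8 * p * C1 / \<beta>" by (simp add: X_def)
        thus ?case using mb_ge2[OF True _ _ _ e2(3)] e2 unfolding mz_def by auto
      qed
      have mzth: "mz - 1/p = \<theta>" by (simp add: \<theta>_def)
      show "\<eta> + ee * B \<le> ((\<beta> + 1) * \<epsilon>) * (mz - 1/p)"
        using e2B unfolding mzth E_def[symmetric] \<eta>_def by linarith
      show "mz > 1/p" using th(1) mzth by linarith
      show "\<eta> > 0" by (rule eta(1))
      show "\<eta> \<le> (\<beta> + 1) * \<epsilon>" using eta(2) by (simp add: E_def)
    qed (use e e2 beta_pos in \<open>auto simp: mz_def\<close>)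
  next
    case False
    hence p2: "p < 2" by simp
    define mz where "mz = (1 + 1/p) / 2"
    define \<theta> where "\<theta> = (1 - 1/p) / 2"
    have th1: "\<theta> > 0" using ip(2) by (simp add: \<theta>_def)
    have th2: "\<theta> \<le> 1" using p by (simp add: \<theta>_def field_simps)
    note th = th1 th2
    have mzth: "mz - 1/p = \<theta>" by (simp add: mz_def \<theta>_def field_simps)
    define ee where "ee = min (E * \<theta> / (2 * B)) ((1 - 1/p) / 4)"
    define \<eta> where "\<eta> = min (E * \<theta> / 2) ((1/4) powr \<beta> * ((1 - 1/p) / 2) / (2 * p * (1/p - 1/2)))"
    have kp: "2 * p * (1/p - 1/2) > 0" using p2 p by (simp add: field_simps)
    have e2c: "ee \<le> (1 - 1/p) / 4" unfolding ee_def by (rule min.cobounded2)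
    have q1: "(1 - 1/p) / 4 < 1" using p by (simp add: field_simps)
    have q2: "(1 - 1/p) / 4 > 0" using p by (simp add: field_simps)
    have e2a: "0 < ee" using Epos th B_pos q2 by (simp add: ee_def)
    have e2: "0 < ee" "ee < 1" "ee \<le> (1 - 1/p) / 4" using e2a e2c q1 by auto
    have e2B: "ee * B \<le> E * \<theta> / 2"
    proof -
      have "ee * B \<le> (E * \<theta> / (2 * B)) * B" using B_pos by (intro mult_right_mono) (auto simp: ee_def)
      thus ?thesis using B_pos by simp
    qed
    have eta3: "\<eta> \<le> E * \<theta> / 2" unfolding \<eta>_def by (rule min.cobounded1)
    have eta4: "\<eta> \<le> (1/4) powr \<beta> * ((1 - 1/p) / 2) / (2 * p * (1/p - 1/2))" unfolding \<eta>_def by (rule min.cobounded2)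
    have "E * \<theta> \<le> E * 1" using Epos th by (intro mult_left_mono) auto
    hence eta2: "\<eta> \<le> E" using eta3 Epos by linarith
    have pa: "(1/4) powr \<beta> * ((1 - 1/p) / 2) / (2 * p * (1/p - 1/2)) > 0"
    proof -
      have x1: "(1/4::real) powr \<beta> > 0" by simp
      have x2: "(1 - 1/p)/2 > 0" using p by (simp add: field_simps)
      have x3: "(1/4) powr \<beta> * ((1 - 1/p)/2) > 0" using x1 x2 by (rule mult_pos_pos)
      show ?thesis by (rule divide_pos_pos[OF x3 kp])
    qed
    have eta1: "\<eta> > 0" using pa Epos th by (simp add: \<eta>_def)
    note eta = eta1 eta2 eta3 eta4
    show ?thesis
    proof (rule LB_gen[where ee=ee and \<eta>=\<eta> and mz=mz])
      show "eventually (\<lambda>y. \<phi>' y powr p \<ge> (1 - ee) * G y \<longrightarrow> y > Rbar \<longrightarrow>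
                 g y - (\<beta> + 1) * f y < \<eta> \<longrightarrow> p * g y powr (p - 1) \<ge> mz) at_top"
        using mb_lt2[OF p2 _ _ _ e2(3) eta(1) eta(4)] e2 unfolding mz_def by auto
      show "\<eta> + ee * B \<le> ((\<beta> + 1) * \<epsilon>) * (mz - 1/p)"
        using eta e2B unfolding mzth E_def[symmetric] by linarith
    qed (use e e2 eta ip in \<open>auto simp: E_def mz_def\<close>)
  qed
qed


lemma main: "(f \<longlongrightarrow> fs) at_top"
proof (rule order_tendstoI)
  fix a assume a: "a < fs"
  have "eventually (\<lambda>y. f y \<ge> fs - (fs - a) / 2) at_top" using a by (intro LB) simp
  moreover have ha: "a < fs - (fs - a) / 2" using a by (simp add: field_simps)
  ultimately show "eventually (\<lambda>y. a < f y) at_top" by (auto elim: eventually_mono intro: less_le_trans[OF ha])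
next
  fix a assume a: "a > fs"
  have "eventually (\<lambda>y. f y \<le> fs + (a - fs) / 2) at_top" using a by (intro UB) simp
  moreover have ha: "fs + (a - fs) / 2 < a" using a by (simp add: field_simps)
  ultimately show "eventually (\<lambda>y. f y < a) at_top" by (auto elim: eventually_mono intro: le_less_trans[OF _ ha])
qed

end

theorem proposition7p2:
  fixes p \<alpha> Rbar :: real and \<phi> \<phi>' \<phi>'' :: "real \<Rightarrow> real"
  assumes p: "p > 1"
    and alpha: "\<alpha> > 0"
    and d1: "\<forall>y\<ge>0. (\<phi> has_real_derivative \<phi>' y) (at y within {0..})"
    and d2: "\<forall>y\<ge>0. (\<phi>' has_real_derivative \<phi>'' y) (at y within {0..})"
    and ode: "\<forall>y>0. \<phi>'' y = 1/2 * y * \<phi>' y - ((p - 2) / (2 * (p - 1))) * \<phi> y - \<bar>\<phi>' y\<bar> powr p"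
    and init0: "\<phi> 0 = 0"
    and init1: "\<phi>' 0 = \<alpha>"
    and pos: "\<forall>y>0. \<phi> y > 0 \<and> \<phi>' y > 0"
    and Rpos: "Rbar > 0"
    and conc: "\<forall>y. 0 \<le> y \<and> y < Rbar \<longrightarrow> \<phi>'' y < 0"
    and conv: "\<forall>y>Rbar. \<phi>'' y > 0"
  shows "((\<lambda>y. \<phi> y / y powr (1 / (p - 1) + 1)) \<longlongrightarrow>
           p powr (- (1 / (p - 1))) / (1 / (p - 1) + 1)) at_top"
proof -
  interpret P72 p \<alpha> Rbar \<phi> \<phi>' \<phi>''
    using assms by unfold_locales auto
  show ?thesis using main unfolding f_def[abs_def] fs_def gs_def \<beta>_def .
qed

end
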